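(* Let $L$ be a countable C-lattice domain in which every element is a join of principal elements. If $L$ is sharp, then $L$ is a Dedekind lattice, i.e. every element of $L$ is principal.
   Context: A multiplicative lattice is a complete lattice $(L,\le)$ with bottom $0$ and top $1$ which is also a commutative monoid with identity $1$ such that $a(\bigvee_\alpha b_\alpha)=\bigvee_\alpha(ab_\alpha)$ for all $a,b_\alpha\in L$. For $x,y\in L$, $(y:x)=\bigvee\{a\in L: ax\le y\}$. An element $c$ is compact if $c\le\bigvee S$ implies $c\le\bigvee T$ for some finite $T\subseteq S$. A C-lattice is a multiplicative lattice in which $1$ is compact, the product of two compact elements is compact, and every element is a join of compact elements. A proper element $p\ne1$ is prime if $xy\le p$ implies $x\le p$ or $y\le p$; $L$ is a domain if $0$ is prime. An element $x$ is principal if $y\wedge zx=((y:x)\wedge z)x$ and $y\vee(z:x)=((yx\vee z):x)$ for all $y,z\in L$. $L$ is sharp if whenever $a_1a_2\le b$ with $a_1,a_2,b\in L$, there exist $b_1,b_2\in L$ with $a_i\le b_i$ ($i=1,2$) and $b=b_1b_2$. *)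

theory Defs
  imports Main "HOL-Library.Countable_Set"
begin

definition mult_lattice :: "('a::complete_lattice \<Rightarrow> 'a \<Rightarrow> 'a) \<Rightarrow> bool" where
  "mult_lattice m \<longleftrightarrow>
     (\<forall>a b c. m (m a b) c = m a (m b c)) \<and>
     (\<forall>a b. m a b = m b a) \<and>
     (\<forall>a. m a top = a) \<and>
     (\<forall>a B. m a (Sup B) = Sup (m a ` B))"

definition ml_res :: "('a::complete_lattice \<Rightarrow> 'a \<Rightarrow> 'a) \<Rightarrow> 'a \<Rightarrow> 'a \<Rightarrow> 'a" where
  "ml_res m y x = Sup {a. m a x \<le> y}"

definition ml_compact :: "'a::complete_lattice \<Rightarrow> bool" where
  "ml_compact c \<longleftrightarrow> (\<forall>S. c \<le> Sup S \<longrightarrow> (\<exists>T\<subseteq>S. finite T \<and> c \<le> Sup T))"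

definition C_lattice :: "('a::complete_lattice \<Rightarrow> 'a \<Rightarrow> 'a) \<Rightarrow> bool" where
  "C_lattice (m::'a\<Rightarrow>'a\<Rightarrow>'a) \<longleftrightarrow> mult_lattice m \<and> ml_compact (top::'a) \<and>
     (\<forall>a b. ml_compact a \<and> ml_compact b \<longrightarrow> ml_compact (m a b)) \<and>
     (\<forall>x::'a. \<exists>S. (\<forall>c\<in>S. ml_compact c) \<and> x = Sup S)"

definition ml_prime :: "('a::complete_lattice \<Rightarrow> 'a \<Rightarrow> 'a) \<Rightarrow> 'a \<Rightarrow> bool" where
  "ml_prime m p \<longleftrightarrow> p \<noteq> top \<and> (\<forall>x y. m x y \<le> p \<longrightarrow> x \<le> p \<or> y \<le> p)"

definition ml_domain :: "('a::complete_lattice \<Rightarrow> 'a \<Rightarrow> 'a) \<Rightarrow> bool" where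
  "ml_domain m \<longleftrightarrow> ml_prime m bot"

definition ml_principal :: "('a::complete_lattice \<Rightarrow> 'a \<Rightarrow> 'a) \<Rightarrow> 'a \<Rightarrow> bool" where
  "ml_principal m x \<longleftrightarrow>
     (\<forall>y z. inf y (m z x) = m (inf (ml_res m y x) z) x \<and>
            sup y (ml_res m z x) = ml_res m (sup (m y x) z) x)"

definition ml_sharp :: "('a::complete_lattice \<Rightarrow> 'a \<Rightarrow> 'a) \<Rightarrow> bool" where
  "ml_sharp m \<longleftrightarrow> (\<forall>a1 a2 b. m a1 a2 \<le> b \<longrightarrow>
      (\<exists>b1 b2. a1 \<le> b1 \<and> a2 \<le> b2 \<and> b = m b1 b2))"

end

theory Submission
  imports Defs
begin

locale SL =
  fixes m :: "'a::complete_lattice \<Rightarrow> 'a \<Rightarrow> 'a"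
  assumes assoc: "m (m a b) c = m a (m b c)"
    and comm: "m a b = m b a"
    and one: "m a top = a"
    and sup_distr: "m a (Sup B) = Sup (m a ` B)"
    and dom: "m a b = bot \<Longrightarrow> a = bot \<or> b = bot"
    and pgen: "\<exists>S. (\<forall>s\<in>S. ml_principal m s) \<and> x = Sup S"
    and sharp: "m a1 a2 \<le> b \<Longrightarrow> \<exists>b1 b2. a1 \<le> b1 \<and> a2 \<le> b2 \<and> b = m b1 b2"
begin

abbreviation "res \<equiv> ml_res m"
abbreviation "P \<equiv> ml_principal m"

lemma lcomm: "m a (m b c) = m b (m a c)"
  by (metis assoc comm)

lemmas ac = assoc comm lcomm

lemma one_l: "m top a = a" by (metis comm one)

lemma sup2: "m c (sup a b) = sup (m c a) (m c b)"
  using sup_distr[of c "{a,b}"] by simp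

lemma sup2l: "m (sup a b) c = sup (m a c) (m b c)"
  using sup2 comm by metis

lemma mono_r: "a \<le> b \<Longrightarrow> m c a \<le> m c b"
  by (metis sup2 sup.absorb2 sup.cobounded1)

lemma mono_l: "a \<le> b \<Longrightarrow> m a c \<le> m b c"
  by (metis comm mono_r)

lemma mono: "a \<le> b \<Longrightarrow> c \<le> d \<Longrightarrow> m a c \<le> m b d"
  by (meson mono_l mono_r order_trans)

lemma bot_r[simp]: "m a bot = bot"
  using sup_distr[of a "{}"] by simp

lemma bot_l[simp]: "m bot a = bot"
  by (metis comm bot_r)

lemma le_l: "m a b \<le> a"
  by (metis mono_r one top_greatest)

lemma le_r: "m a b \<le> b"
  by (metis comm le_l)

lemma res_mul: "m (res y x) x \<le> y"
proof -
  have "m (res y x) x = m x (Sup {a. m a x \<le> y})" by (simp add: ml_res_def comm)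
  also have "\<dots> = Sup (m x ` {a. m a x \<le> y})" by (rule sup_distr)
  also have "\<dots> \<le> y" by (auto intro!: Sup_least simp: comm)
  finally show ?thesis .
qed

lemma res_iff: "a \<le> res y x \<longleftrightarrow> m a x \<le> y"
proof
  assume "a \<le> res y x" then show "m a x \<le> y" by (meson mono_l res_mul order_trans)
next
  assume "m a x \<le> y" then show "a \<le> res y x" unfolding ml_res_def by (auto intro: Sup_upper)
qed

lemma eq_by_le: "(\<And>a::'a. a \<le> u \<longleftrightarrow> a \<le> v) \<Longrightarrow> u = v"
  by (meson order.antisym order_refl)

lemma res_res: "res (res z x) y = res z (m x y)"
  by (rule eq_by_le) (simp add: res_iff ac)

lemma res_top_r: "res y top = y"
  by (metis order.antisym one res_iff order_refl)

lemma res_bot_r: "res z bot = top"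
  by (metis res_iff bot_r bot_least top.extremum_unique)

lemma P_meet: "P x \<Longrightarrow> inf y (m z x) = m (inf (res y x) z) x"
  unfolding ml_principal_def by blast

lemma P_join: "P x \<Longrightarrow> sup y (res z x) = res (sup (m y x) z) x"
  unfolding ml_principal_def by blast

lemma P_weak: "P x \<Longrightarrow> y \<le> x \<Longrightarrow> y = m (res y x) x"
  using P_meet[of x y top] by (simp add: one_l inf.absorb1)

lemma res_bot: "x \<noteq> bot \<Longrightarrow> res bot x = bot"
  unfolding ml_res_def using dom by (auto intro!: Sup_eqI simp: bot_unique)

lemma P_canc_eq: "P x \<Longrightarrow> x \<noteq> bot \<Longrightarrow> res (m y x) x = y"
  using P_join[of x y bot] by (simp add: res_bot)

lemma cancel: "P x \<Longrightarrow> x \<noteq> bot \<Longrightarrow> m a x \<le> m b x \<Longrightarrow> a \<le> b"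
  by (metis P_canc_eq res_iff)

lemma cancel_eq: "P x \<Longrightarrow> x \<noteq> bot \<Longrightarrow> m a x = m b x \<Longrightarrow> a = b"
proof -
  assume a: "P x" "x \<noteq> bot" "m a x = m b x"
  then have "a \<le> b" "b \<le> a" using cancel[OF a(1,2)] by auto
  then show ?thesis by (rule order.antisym)
qed

lemma P_top: "P top"
  unfolding ml_principal_def by (simp add: one res_top_r)

lemma P_bot: "P bot"
  unfolding ml_principal_def by (simp add: res_bot_r)

lemma P_mult: "P x \<Longrightarrow> P y \<Longrightarrow> P (m x y)"
proof -
  assume px: "P x" and py: "P y"
  show "P (m x y)" unfolding ml_principal_def
  proof (intro allI conjI)
    fix Y Z
    have "inf Y (m Z (m x y)) = inf Y (m (m Z y) x)" by (simp add: ac)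
    also have "\<dots> = m (inf (res Y x) (m Z y)) x" by (rule P_meet[OF px])
    also have "inf (res Y x) (m Z y) = m (inf (res (res Y x) y) Z) y" by (rule P_meet[OF py])
    finally show "inf Y (m Z (m x y)) = m (inf (res Y (m x y)) Z) (m x y)"
      by (simp add: res_res ac)
  next
    fix Y Z
    have "sup Y (res Z (m x y)) = sup Y (res (res Z x) y)" by (simp add: res_res)
    also have "\<dots> = res (sup (m Y y) (res Z x)) y" by (rule P_join[OF py])
    also have "sup (m Y y) (res Z x) = res (sup (m (m Y y) x) Z) x" by (rule P_join[OF px])
    finally show "sup Y (res Z (m x y)) = res (sup (m Y (m x y)) Z) (m x y)"
      by (simp add: res_res ac)
  qed
qed


lemma factor:
  assumes pp: "P p" and pnz: "p \<noteq> bot" and pab: "p = m a b"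
  shows "P a"
proof -
  have anz: "a \<noteq> bot" and bnz: "b \<noteq> bot" using pnz pab by auto
  have cb: "c \<le> e" if "m c b \<le> m e b" for c e
  proof -
    have "m c p \<le> m e p" using mono_l[OF that, of a] by (simp add: pab ac)
    then show ?thesis using cancel[OF pp pnz] by blast
  qed
  have ca: "c \<le> e" if "m c a \<le> m e a" for c e
  proof -
    have "m c p \<le> m e p" using mono_l[OF that, of b] by (simp add: pab ac)
    then show ?thesis using cancel[OF pp pnz] by blast
  qed
  have wk: "y = m a (res (m y b) p)" if "y \<le> a" for y
  proof -
    have "m y b \<le> p" using mono_l[OF that] pab by simp
    then have "m y b = m (res (m y b) p) p" using P_weak[OF pp] by blast
    also have "\<dots> = m (m a (res (m y b) p)) b" by (simp add: pab ac)
    finally have e: "m y b = m (m a (res (m y b) p)) b" .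
    show ?thesis using cb[of y] cb[of _ y] e by (metis order.antisym order_refl)
  qed
  show "P a" unfolding ml_principal_def
  proof (intro allI conjI)
    fix y z
    show "inf y (m z a) = m (inf (res y a) z) a"
    proof (rule order.antisym)
      show "m (inf (res y a) z) a \<le> inf y (m z a)"
        by (meson inf.cobounded1 inf.cobounded2 le_inf_iff mono_l order_trans res_mul)
    next
      define L where "L = inf y (m z a)"
      define e where "e = res (m L b) p"
      have "L \<le> a" unfolding L_def by (meson inf.coboundedI2 le_r)
      then have Le: "L = m a e" unfolding e_def by (rule wk)
      have Le2: "m e a = L" using Le by (simp add: comm)
      have "m e a \<le> y" unfolding Le2 L_def by simp
      then have e1: "e \<le> res y a" by (simp add: res_iff)
      have "m e a \<le> m z a" unfolding Le2 L_def by simp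
      then have e2: "e \<le> z" by (rule ca)
      have "L = m e a" using Le by (simp add: comm)
      also have "\<dots> \<le> m (inf (res y a) z) a" using e1 e2 by (intro mono_l) simp
      finally show "inf y (m z a) \<le> m (inf (res y a) z) a" unfolding L_def .
    qed
  next
    fix y z
    show "sup y (res z a) = res (sup (m y a) z) a"
    proof (rule order.antisym)
      show "sup y (res z a) \<le> res (sup (m y a) z) a"
        by (simp add: res_iff sup2l le_supI1 le_supI2 res_mul)
    next
      define c where "c = res (sup (m y a) z) a"
      have "m c a \<le> sup (m y a) z" unfolding c_def by (rule res_mul)
      then have "m (m c a) b \<le> m (sup (m y a) z) b" by (rule mono_l)
      then have "m c p \<le> sup (m y p) (m z b)" by (simp add: sup2 sup2l pab ac)
      then have "c \<le> res (sup (m y p) (m z b)) p" by (simp add: res_iff)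
      also have "\<dots> = sup y (res (m z b) p)" by (rule P_join[OF pp, symmetric])
      also have "res (m z b) p \<le> res z a"
      proof -
        have "m (res (m z b) p) p \<le> m z b" by (rule res_mul)
        then have "m (m (res (m z b) p) a) b \<le> m z b" by (simp add: pab ac)
        then have "m (res (m z b) p) a \<le> z" by (rule cb)
        then show ?thesis by (simp add: res_iff)
      qed
      then have "sup y (res (m z b) p) \<le> sup y (res z a)" by (rule sup_mono[OF order_refl])
      finally show "res (sup (m y a) z) a \<le> sup y (res z a)" unfolding c_def .
    qed
  qed
qed

lemma factor2: "P p \<Longrightarrow> p \<noteq> bot \<Longrightarrow> p = m a b \<Longrightarrow> P b"
  using factor[of p b a] comm by metis

lemma exP: "x \<noteq> bot \<Longrightarrow> \<exists>p. P p \<and> p \<noteq> bot \<and> p \<le> x"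
proof -
  assume "x \<noteq> bot"
  obtain S where S: "\<forall>s\<in>S. P s" "x = Sup S" using pgen by blast
  have "\<exists>s\<in>S. s \<noteq> bot"
  proof (rule ccontr)
    assume "\<not> (\<exists>s\<in>S. s \<noteq> bot)"
    then have "Sup S = bot" by (auto simp: Sup_bot_conv)
    then show False using \<open>x \<noteq> bot\<close> S(2) by simp
  qed
  then show ?thesis using S by (auto intro: Sup_upper)
qed

lemma res_prime: "ml_prime m q \<Longrightarrow> \<not> s \<le> q \<Longrightarrow> res q s = q"
proof (rule order.antisym)
  assume pr: "ml_prime m q" and ns: "\<not> s \<le> q"
  have "m (res q s) s \<le> q" by (rule res_mul)
  then show "res q s \<le> q" using pr ns unfolding ml_prime_def by blast
  show "q \<le> res q s" by (simp add: res_iff le_l)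
qed

lemma coatom:
  assumes pq: "P q" and qnz: "q \<noteq> bot" and pr: "ml_prime m q" and qy: "q \<le> y"
  shows "y = q \<or> y = top"
proof (cases "y \<le> q")
  case True then show ?thesis using qy by auto
next
  case False
  obtain S where S: "\<forall>s\<in>S. P s" "y = Sup S" using pgen by blast
  have "\<exists>s\<in>S. \<not> s \<le> q"
  proof (rule ccontr)
    assume "\<not> (\<exists>s\<in>S. \<not> s \<le> q)"
    then have "Sup S \<le> q" by (auto intro: Sup_least)
    then show False using False S(2) by simp
  qed
  then obtain s where s0: "s \<in> S" "\<not> s \<le> q" by blast
  have s: "P s" "s \<le> y" "\<not> s \<le> q" using s0 S by (auto intro: Sup_upper)
  define w where "w = sup q s"
  define b where "b = sup q (m s s)"
  have ww: "m w w \<le> b" unfolding w_def b_def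
    by (simp add: sup2 sup2l le_supI1 le_supI2 le_l le_r)
  obtain b1 b2 where bb: "w \<le> b1" "w \<le> b2" "b = m b1 b2" using sharp[OF ww] by blast
  have rbs: "res b s = w"
    using P_join[OF s(1), of s q] res_prime[OF pr s(3)] unfolding b_def w_def
    by (simp add: sup_commute)
  have sw: "s \<le> w" unfolding w_def by simp
  have "m b1 s \<le> m b1 b2" using bb(2) sw by (intro mono_r) simp
  then have "m b1 s \<le> b" using bb(3) by simp
  then have "b1 \<le> w" using rbs res_iff by blast
  then have b1: "b1 = w" using bb by auto
  have "m b2 s \<le> m b2 b1" using bb(1) sw by (intro mono_r) simp
  then have "m b2 s \<le> b" using bb(3) by (simp add: comm)
  then have "b2 \<le> w" using rbs res_iff by blast
  then have b2: "b2 = w" using bb by auto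
  have qb: "q \<le> m w w" using bb b1 b2 unfolding b_def by (metis sup.cobounded1)
  have "m w w = sup (m w q) (sup (m q s) (m s s))" unfolding w_def by (simp add: sup2 sup2l ac)
  also have "\<dots> \<le> sup (m w q) (m s s)"
  proof -
    have "m q s \<le> m w q" using mono_l[OF sw, of q] by (simp add: comm)
    then show ?thesis by (simp add: le_supI1)
  qed
  finally have "q \<le> sup (m w q) (m s s)" using qb by simp
  then have "top \<le> res (sup (m w q) (m s s)) q" by (simp add: res_iff one_l)
  also have "\<dots> = sup w (res (m s s) q)" by (rule P_join[OF pq, symmetric])
  also have "res (m s s) q \<le> w"
  proof -
    define r where "r = res (m s s) q"
    have pss: "P (m s s)" using P_mult s(1) by blast
    have nss: "\<not> m s s \<le> q" using pr s(3) unfolding ml_prime_def by blast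
    have "m r q \<le> inf (m s s) q" unfolding r_def by (simp add: res_mul le_r)
    also have "\<dots> = m (res q (m s s)) (m s s)" using P_meet[OF pss, of q top]
      by (simp add: one_l inf_commute)
    also have "\<dots> = m (m s s) q" using res_prime[OF pr nss] by (simp add: comm)
    finally have "r \<le> m s s" using cancel[OF pq qnz] by blast
    also have "\<dots> \<le> s" by (rule le_l)
    finally show ?thesis unfolding r_def using sw by simp
  qed
  then have "sup w (res (m s s) q) \<le> w" by simp
  finally have "w = top" using top_le by blast
  then have "top \<le> y" using s(2) qy unfolding w_def by (metis sup_least)
  then show ?thesis by (simp add: top_le)
qed


lemma closure:
  assumes gnz: "g \<noteq> bot"
  shows "\<exists>c. P c \<and> g \<le> c \<and> (\<forall>s. P s \<and> g \<le> s \<longrightarrow> c \<le> s)"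
proof -
  obtain p where p: "P p" "p \<noteq> bot" "p \<le> g" using exP[OF gnz] by blast
  define a where "a = res p g"
  have "m g a \<le> p" unfolding a_def using res_mul by (simp add: comm)
  then obtain b1 b2 where bb: "g \<le> b1" "a \<le> b2" "p = m b1 b2" using sharp by blast
  have pb1: "P b1" using factor[OF p(1,2) bb(3)] .
  have pb2: "P b2" using factor2[OF p(1,2) bb(3)] .
  have b2nz: "b2 \<noteq> bot" using p(2) bb(3) by auto
  have "b1 \<le> s" if ps: "P s" and gs: "g \<le> s" for s
  proof -
    have ps': "p \<le> s" using p(3) gs by simp
    have pe: "p = m (res p s) s" using P_weak[OF ps ps'] .
    have "m (res p s) g \<le> m (res p s) s" using gs by (rule mono_r)
    also have "\<dots> \<le> p" by (rule res_mul)
    finally have "res p s \<le> a" unfolding a_def by (simp add: res_iff)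
    then have "res p s \<le> b2" using bb(2) by simp
    then have "m (res p s) s \<le> m b2 s" by (rule mono_l)
    then have "m b1 b2 \<le> m s b2" using pe bb(3) by (simp add: comm)
    then show "b1 \<le> s" using cancel[OF pb2 b2nz] by blast
  qed
  then show ?thesis using pb1 bb(1) by blast
qed

definition pw :: "'a \<Rightarrow> nat \<Rightarrow> 'a" where "pw v n = (m v ^^ n) top"

lemma pw_0[simp]: "pw v 0 = top" and pw_Suc[simp]: "pw v (Suc n) = m v (pw v n)"
  by (simp_all add: pw_def)

lemma P_pw: "P v \<Longrightarrow> P (pw v n)"
  by (induction n) (simp_all add: P_top P_mult)

lemma archi:
  assumes px: "P x" and xnz: "x \<noteq> bot" and pv: "P v" and vt: "v \<noteq> top"
    and all: "\<forall>n. x \<le> pw v n"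
  shows False
proof -
  define g where "g = Inf (range (pw v))"
  have xg: "x \<le> g" unfolding g_def using all by (auto intro: Inf_greatest)
  then have gnz: "g \<noteq> bot" using xnz by (auto simp: bot_unique)
  obtain c where c: "P c" "g \<le> c" "\<forall>s. P s \<and> g \<le> s \<longrightarrow> c \<le> s" using closure[OF gnz] by blast
  have gpw: "g \<le> pw v n" for n unfolding g_def by (auto intro: Inf_lower)
  have cpw: "c \<le> pw v n" for n using c(3) P_pw[OF pv] gpw by blast
  have vx: "x \<le> v" using all[rule_format, of 1] by (simp add: one)
  then have vnz: "v \<noteq> bot" using xnz by (auto simp: bot_unique)
  have cv: "c \<le> v" using cpw[of 1] by (simp add: one)
  define c' where "c' = res c v"
  have ce: "c = m c' v" unfolding c'_def using P_weak[OF pv cv] .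
  have "c' \<le> pw v n" for n
  proof -
    have "m c' v \<le> m (pw v n) v" using cpw[of "Suc n"] ce by (simp add: comm)
    then show ?thesis using cancel[OF pv vnz] by blast
  qed
  then have "c' \<le> g" unfolding g_def by (auto intro: Inf_greatest)
  then have "c' \<le> c" using c(2) by simp
  moreover have "c \<le> c'" using ce le_l by simp
  ultimately have cc: "c' = c" by simp
  have cnz: "c \<noteq> bot" using gnz c(2) by (auto simp: bot_unique)
  have "m v c = m top c" using ce cc by (simp add: comm one_l)
  then have "v = top" using cancel_eq[OF c(1) cnz] by blast
  then show False using vt by simp
qed

inductive inF :: "'a \<Rightarrow> bool" where
  F1: "inF top"
| F2: "P q \<Longrightarrow> q \<noteq> bot \<Longrightarrow> ml_prime m q \<Longrightarrow> inF c \<Longrightarrow> inF (m q c)"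

lemma inF_mult: "inF a \<Longrightarrow> inF b \<Longrightarrow> inF (m a b)"
proof (induction rule: inF.induct)
  case F1 then show ?case by (simp add: one_l)
next
  case (F2 q c) then show ?case by (simp add: assoc inF.F2)
qed

lemma inF_pw: "inF v \<Longrightarrow> inF (pw v n)"
  by (induction n) (simp_all add: inF.F1 inF_mult)

lemma Fup: "inF c \<Longrightarrow> c \<le> d \<Longrightarrow> P d"
proof (induction arbitrary: d rule: inF.induct)
  case F1 then have "d = top" by (simp add: top_le)
  then show ?case using P_top by simp
next
  case (F2 q c)
  obtain d1 d2 where dd: "q \<le> d1" "c \<le> d2" "d = m d1 d2" using sharp[OF F2.prems] by blast
  have "d1 = q \<or> d1 = top" using coatom[OF F2.hyps(1,2,3) dd(1)] .
  then have "P d1" using F2.hyps(1) P_top by blast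
  moreover have "P d2" using F2.IH dd(2) by blast
  ultimately show ?case using dd(3) P_mult by simp
qed


lemma split0:
  assumes pu: "P u" and unz: "u \<noteq> bot" and nF: "\<not> inF u"
  shows "\<exists>x v. P x \<and> P v \<and> x \<noteq> bot \<and> v \<noteq> bot \<and> u = m x v \<and> \<not> inF x \<and> v \<noteq> top"
proof -
  have ut: "u \<noteq> top" using nF inF.F1 by blast
  have "\<not> ml_prime m u"
  proof
    assume "ml_prime m u"
    then have "inF (m u top)" using inF.F2[OF pu unz _ inF.F1] by blast
    then show False using nF by (simp add: one)
  qed
  then obtain a1 a2 where aa: "m a1 a2 \<le> u" "\<not> a1 \<le> u" "\<not> a2 \<le> u"
    using ut unfolding ml_prime_def by blast
  obtain b1 b2 where bb: "a1 \<le> b1" "a2 \<le> b2" "u = m b1 b2" using sharp[OF aa(1)] by blast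
  have pb: "P b1" "P b2" using factor[OF pu unz bb(3)] factor2[OF pu unz bb(3)] by auto
  have nz: "b1 \<noteq> bot" "b2 \<noteq> bot" using unz bb(3) by auto
  have "b1 \<noteq> top" using bb aa(3) by (auto simp: one_l)
  moreover have "b2 \<noteq> top" using bb aa(2) by (auto simp: one)
  moreover have "\<not> inF b1 \<or> \<not> inF b2" using nF bb(3) inF_mult by blast
  ultimately show ?thesis using pb nz bb(3) comm by metis
qed

lemma splitting:
  assumes pu: "P u" and unz: "u \<noteq> bot" and nF: "\<not> inF u"
  shows "\<exists>x y. P x \<and> P y \<and> u \<le> x \<and> u \<le> y \<and> \<not> inF x \<and> \<not> inF y \<and> \<not> m x y \<le> u"
proof (rule ccontr)
  assume "\<not> ?thesis"
  then have H: "\<And>x y. P x \<Longrightarrow> P y \<Longrightarrow> u \<le> x \<Longrightarrow> u \<le> y \<Longrightarrow> \<not> inF x \<Longrightarrow> \<not> inF y \<Longrightarrow> m x y \<le> u"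
    by blast
  obtain x v where xv: "P x" "P v" "x \<noteq> bot" "v \<noteq> bot" "u = m x v" "\<not> inF x" "v \<noteq> top"
    using split0[OF pu unz nF] by blast
  have ux: "u \<le> x" using xv(5) le_l by simp
  have "m x x \<le> m v x" using H[OF xv(1) xv(1) ux ux xv(6) xv(6)] xv(5) by (simp add: comm)
  then have xlv: "x \<le> v" using cancel[OF xv(1) xv(3)] by blast
  define w where "w = res x v"
  have xw: "x = m w v" unfolding w_def using P_weak[OF xv(2) xlv] .
  show False
  proof (cases "inF v")
    case False
    have uv: "u \<le> v" using xv(5) le_r by simp
    have pvv: "P (m v v)" using P_mult xv(2) by blast
    have vvnz: "m v v \<noteq> bot" using xv(4) dom by blast
    have "m v v \<le> u" using H[OF xv(2) xv(2) uv uv False False] .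
    then have "m top (m v v) \<le> m w (m v v)" using xv(5) xw by (simp add: one_l ac)
    then have "top \<le> w" using cancel[OF pvv vvnz] by blast
    then have "w = top" by (simp add: top_le)
    then have xv2: "x = v" using xw by (simp add: one_l)
    obtain e f where ef: "P e" "P f" "e \<noteq> bot" "f \<noteq> bot" "x = m e f" "\<not> inF e" "f \<noteq> top"
      using split0[OF xv(1) xv(3) xv(6)] by blast
    have ue: "u \<le> e" using ux ef(5) le_l order_trans by metis
    have pee: "P (m e e)" using P_mult ef(1) by blast
    have eenz: "m e e \<noteq> bot" using ef(3) dom by blast
    have "m e e \<le> u" using H[OF ef(1) ef(1) ue ue ef(6) ef(6)] .
    moreover have "u = m (m f f) (m e e)"
    proof -
      have "u = m x x" using xv(5) xv2 by simp
      also have "\<dots> = m (m e f) (m e f)" using ef(5) by simp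
      finally show ?thesis by (simp add: ac)
    qed
    ultimately have "m top (m e e) \<le> m (m f f) (m e e)" by (simp add: one_l)
    then have "top \<le> m f f" using cancel[OF pee eenz] by blast
    then have "top \<le> f" using le_l order_trans by metis
    then show False using ef(7) by (simp add: top_le)
  next
    case True
    have "x \<le> pw v n" for n
    proof (induction n)
      case 0 then show ?case by simp
    next
      case (Suc n)
      have ppw: "P (pw v n)" using P_pw xv(2) by blast
      define z where "z = res x (pw v n)"
      have xz: "x = m z (pw v n)" unfolding z_def using P_weak[OF ppw Suc.IH] .
      have pz: "P z" using factor[OF xv(1) xv(3) xz] .
      have uz: "u \<le> z" using ux xz le_l order_trans by metis
      have nFz: "\<not> inF z" using xv(6) xz inF_mult inF_pw[OF True] by metis
      have "m z x \<le> u" using H[OF pz xv(1) uz ux nFz xv(6)] .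
      then have "m z x \<le> m v x" using xv(5) by (simp add: comm)
      then have "z \<le> v" using cancel[OF xv(1) xv(3)] by blast
      then have "m z (pw v n) \<le> m v (pw v n)" by (rule mono_l)
      then show ?case using xz by simp
    qed
    then show False using archi[OF xv(1) xv(3) xv(2) xv(7)] by blast
  qed
qed


definition good :: "'a \<times> 'a \<Rightarrow> bool" where
  "good st \<longleftrightarrow> P (fst st) \<and> fst st \<noteq> bot \<and> P (snd st) \<and> snd st \<noteq> bot \<and> \<not> inF (snd st)"

definition sel :: "'a \<times> 'a \<Rightarrow> 'a \<times> 'a" where
  "sel st = (SOME xy. P (fst xy) \<and> P (snd xy) \<and> snd st \<le> fst xy \<and> snd st \<le> snd xy \<and>
      \<not> inF (fst xy) \<and> \<not> inF (snd xy) \<and> \<not> m (fst xy) (snd xy) \<le> snd st)"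

definition cA :: "'a \<times> 'a \<Rightarrow> 'a \<times> 'a" where
  "cA st = (fst st, fst (sel st))"

definition cB :: "'a \<times> 'a \<Rightarrow> 'a \<times> 'a" where
  "cB st = (m (fst st) (res (snd st) (snd (sel st))), snd (sel st))"

definition inI :: "'a \<Rightarrow> 'a \<times> 'a \<Rightarrow> bool" where
  "inI z st \<longleftrightarrow> m (fst st) (snd st) \<le> z \<and> z \<le> fst st"

lemma children:
  assumes g: "good st"
  shows "good (cA st)" "good (cB st)"
    "m (fst st) (snd st) \<le> m (fst (cA st)) (snd (cA st))" "fst (cA st) \<le> fst st"
    "m (fst st) (snd st) \<le> m (fst (cB st)) (snd (cB st))" "fst (cB st) \<le> fst st"
    "\<not> (inI z (cA st) \<and> inI z (cB st))"
proof -
  obtain t u where st: "st = (t, u)" by (cases st)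
  have gg: "P t" "t \<noteq> bot" "P u" "u \<noteq> bot" "\<not> inF u" using g unfolding good_def st by auto
  obtain x y where xy: "sel st = (x, y)" by (cases "sel st")
  have "\<exists>xy. P (fst xy) \<and> P (snd xy) \<and> snd st \<le> fst xy \<and> snd st \<le> snd xy \<and>
      \<not> inF (fst xy) \<and> \<not> inF (snd xy) \<and> \<not> m (fst xy) (snd xy) \<le> snd st"
    using splitting[OF gg(3,4,5)] st by auto
  then have "P (fst (sel st)) \<and> P (snd (sel st)) \<and> snd st \<le> fst (sel st) \<and> snd st \<le> snd (sel st) \<and>
      \<not> inF (fst (sel st)) \<and> \<not> inF (snd (sel st)) \<and> \<not> m (fst (sel st)) (snd (sel st)) \<le> snd st"
    unfolding sel_def by (rule someI_ex)
  then have sx: "P x" "P y" "u \<le> x" "u \<le> y" "\<not> inF x" "\<not> inF y" "\<not> m x y \<le> u"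
    using xy st by auto
  have xnz: "x \<noteq> bot" using sx(3) gg(4) by (auto simp: bot_unique)
  have ynz: "y \<noteq> bot" using sx(4) gg(4) by (auto simp: bot_unique)
  define r where "r = res u y"
  have ur: "u = m r y" unfolding r_def using P_weak[OF sx(2) sx(4)] .
  have pr: "P r" using factor[OF gg(3,4) ur] .
  have rnz: "r \<noteq> bot" using gg(4) ur by auto
  have cA': "cA st = (t, x)" unfolding cA_def using st xy by simp
  have cB': "cB st = (m t r, y)" unfolding cB_def r_def using st xy by simp
  show "good (cA st)" unfolding cA' good_def using gg sx xnz by simp
  show "good (cB st)" unfolding cB' good_def using gg sx ynz pr rnz P_mult dom by auto
  show "m (fst st) (snd st) \<le> m (fst (cA st)) (snd (cA st))" unfolding cA' unfolding st using sx(3) mono_r by simp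
  show "fst (cA st) \<le> fst st" unfolding cA' unfolding st by simp
  show "m (fst st) (snd st) \<le> m (fst (cB st)) (snd (cB st))" unfolding cB' unfolding st using ur by (simp add: assoc)
  show "fst (cB st) \<le> fst st" unfolding cB' unfolding st by (simp add: le_l)
  show "\<not> (inI z (cA st) \<and> inI z (cB st))"
  proof
    assume "inI z (cA st) \<and> inI z (cB st)"
    then have "m t x \<le> z" "z \<le> m t r" unfolding inI_def cA' cB' by auto
    then have "m x t \<le> m r t" by (simp add: comm)
    then have "x \<le> r" using cancel[OF gg(1,2)] by blast
    then have "m x y \<le> u" unfolding r_def by (simp add: res_iff)
    then show False using sx(7) by simp
  qed
qed

lemma cantor:
  assumes pu: "P u0" and unz: "u0 \<noteq> bot" and nF: "\<not> inF u0"
    and cnt: "countable (UNIV :: 'a set)"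
  shows False
proof -
  define e where "e = from_nat_into (UNIV :: 'a set)"
  define sq where "sq = rec_nat (top, u0) (\<lambda>n s. if inI (e n) (cA s) then cB s else cA s)"
  have sq0: "sq 0 = (top, u0)" unfolding sq_def by simp
  have sqS: "sq (Suc n) = (if inI (e n) (cA (sq n)) then cB (sq n) else cA (sq n))" for n
    unfolding sq_def by simp
  have gd: "good (sq n)" for n
  proof (induction n)
    case 0
    have "(top::'a) \<noteq> bot"
    proof
      assume "(top::'a) = bot"
      then have "u0 \<le> bot" using top_greatest[of u0] by (rule subst)
      then show False using unz by (simp add: bot_unique)
    qed
    then show ?case unfolding sq0 good_def using pu unz nF P_top by simp
  next
    case (Suc n) then show ?case unfolding sqS using children by simp
  qed
  define lo where "lo n = m (fst (sq n)) (snd (sq n))" for n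
  define hi where "hi n = fst (sq n)" for n
  have lomono: "lo n \<le> lo (Suc n)" for n unfolding lo_def sqS using children[OF gd[of n]] by simp
  have himono: "hi (Suc n) \<le> hi n" for n unfolding hi_def sqS using children[OF gd[of n]] by simp
  have lohi: "lo n \<le> hi n" for n unfolding lo_def hi_def by (rule le_l)
  have avoid: "\<not> inI (e n) (sq (Suc n))" for n
    unfolding sqS using children(7)[OF gd[of n], of "e n"] by auto
  define z where "z = Sup (range lo)"
  have lz: "lo n \<le> z" for n unfolding z_def by (auto intro: Sup_upper)
  have zh: "z \<le> hi k" for k
    unfolding z_def
  proof (rule Sup_least, clarify)
    fix n
    show "lo n \<le> hi k"
    proof (cases "n \<le> k")
      case True
      then have "lo n \<le> lo k" using lift_Suc_mono_le[of lo, OF lomono] by blast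
      then show ?thesis using lohi[of k] by simp
    next
      case False
      then have "hi n \<le> hi k" using lift_Suc_antimono_le[of hi, OF himono, of k n] by simp
      then show ?thesis using lohi[of n] by simp
    qed
  qed
  obtain n where "e n = z" unfolding e_def using from_nat_into_surj[OF cnt] by blast
  then have "inI (e n) (sq (Suc n))" unfolding inI_def using lz zh unfolding lo_def hi_def by simp
  then show False using avoid by blast
qed

end

theorem corollary3p15:
  fixes m :: "'a::complete_lattice \<Rightarrow> 'a \<Rightarrow> 'a"
  assumes "countable (UNIV :: 'a set)"
    and "C_lattice m"
    and "ml_domain m"
    and "\<forall>x. \<exists>S. (\<forall>s\<in>S. ml_principal m s) \<and> x = Sup S"
    and "ml_sharp m"
  shows "\<forall>x. ml_principal m x"
proof -
  have ml: "mult_lattice m" using assms(2) unfolding C_lattice_def by blast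
  interpret SL m
  proof
    fix a b c :: 'a and B :: "'a set"
    show "m (m a b) c = m a (m b c)" using ml unfolding mult_lattice_def by blast
    show "m a b = m b a" using ml unfolding mult_lattice_def by blast
    show "m a top = a" using ml unfolding mult_lattice_def by blast
    show "m a (Sup B) = Sup (m a ` B)" using ml unfolding mult_lattice_def by blast
  next
    fix a b :: 'a
    assume "m a b = bot"
    then show "a = bot \<or> b = bot" using assms(3) unfolding ml_domain_def ml_prime_def
      by (simp add: bot_unique)
  next
    fix x :: 'a
    show "\<exists>S. (\<forall>s\<in>S. ml_principal m s) \<and> x = Sup S" using assms(4) by blast
  next
    fix a1 a2 b :: 'a
    assume "m a1 a2 \<le> b"
    then show "\<exists>b1 b2. a1 \<le> b1 \<and> a2 \<le> b2 \<and> b = m b1 b2"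
      using assms(5) unfolding ml_sharp_def by blast
  qed
  show ?thesis
  proof
    fix x :: 'a
    show "ml_principal m x"
    proof (cases "x = bot")
      case True then show ?thesis using P_bot by simp
    next
      case False
      obtain p where p: "ml_principal m p" "p \<noteq> bot" "p \<le> x" using exP[OF False] by blast
      have "inF p" using cantor[OF p(1,2) _ assms(1)] by blast
      then show ?thesis using Fup p(3) by blast
    qed
  qed
qed

end
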